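(* Let $p>3$ be prime, $t\in\{1,3,p,3p\}$, and $1\le r\le 3p-1$ with $\gcd(r,3p)=1$. Then \[\mathsf{c}(V_{3p},a_{3p,r,t})=\begin{cases}\gcd(3p,t) & \text{if } r=1,\\ 3+\frac{3(p-1)}{|r|_p} & \text{if } 1\ne r\equiv1\pmod 3\text{ and } t\in\{3,3p\},\\ 1+\frac{p-1}{|r|_p} & \text{if } 1\ne r\equiv 1\pmod3,\ t\in\{1,p\},\ 3\nmid|r|_p,\\ 1+\frac{3(p-1)}{|r|_p} & \text{if } 1\ne r\equiv1\pmod 3,\ t\in\{1,p\},\ 3\mid|r|_p,\\ 2\gcd(p,t) & \text{if } r\equiv 2\pmod 3\text{ and } r\equiv1\pmod p,\\ 2+\frac{2(p-1)}{|r|_p} & \text{if } r\equiv2\pmod3,\ r\not\equiv1\pmod p,\ |r|_p\text{ odd},\\ 2+\frac{3(p-1)}{|r|_p} & \text{if } r\equiv 2\pmod 3,\ r\not\equiv 1\pmod p,\ |r|_p\text{ even}.\end{cases}\]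
   Context: $\mathrm{D}_{6p}=\langle u,v\mid u^{3p}=1=v^2,\ vuv=u^{-1}\rangle$. For integers $r,t$ with $\gcd(r,3p)=1$, $a_{3p,r,t}$ is the automorphism of $\mathrm{D}_{6p}$ with $u^i\mapsto u^{ri}$, $u^jv\mapsto u^{rj+t}v$. $V_{3p}:=\{u^iv:0\le i\le 3p-1\}$, and $\mathsf{c}(V_{3p},a)$ is the number of cycles (including fixed points) of the permutation induced by $a$ on $V_{3p}$. $|r|_p$ is the multiplicative order of $r$ modulo $p$. *)

theory Defs
  imports "HOL-Number_Theory.Number_Theory"
begin

text \<open>Elements of D_{2n} = <u,v | u^n = 1 = v^2, v u v = u^{-1}> are encoded as
  pairs (i, b) with 0 \<le> i < n, standing for u^i (b = False) or u^i v (b = True).\<close>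

definition dihedral :: "nat \<Rightarrow> (nat \<times> bool) set" where
  "dihedral n = {0..<n} \<times> UNIV"

definition Vset :: "nat \<Rightarrow> (nat \<times> bool) set" where
  "Vset n = {0..<n} \<times> {True}"

definition aut :: "nat \<Rightarrow> nat \<Rightarrow> nat \<Rightarrow> nat \<times> bool \<Rightarrow> nat \<times> bool" where
  "aut n r t x = (if snd x then ((r * fst x + t) mod n, True) else ((r * fst x) mod n, False))"

definition num_cycles :: "('a \<Rightarrow> 'a) \<Rightarrow> 'a set \<Rightarrow> nat" where
  "num_cycles f A = card ((\<lambda>x. {(f ^^ k) x | k. True}) ` A)"

end

theory Submission
  imports Defs
begin

lemma funpow_period_mult:
  assumes "(f ^^ L) x = x" shows "(f ^^ (L * m)) x = x"
proof (induction m)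
  case 0 then show ?case by simp
next
  case (Suc m)
  have "(f ^^ (L * Suc m)) x = (f ^^ (L * m)) ((f ^^ L) x)"
    by (simp only: mult_Suc_right add.commute[of L] funpow_add comp_apply)
  then show ?case using Suc assms by simp
qed

definition orb :: "('a \<Rightarrow> 'a) \<Rightarrow> 'a \<Rightarrow> 'a set" where
  "orb f x = {(f ^^ k) x | k. True}"

lemma orb_sub:
  assumes "y \<in> orb f x" shows "orb f y \<subseteq> orb f x"
proof
  fix z assume "z \<in> orb f y"
  then obtain k where z: "z = (f ^^ k) y" by (auto simp: orb_def)
  obtain j where y: "y = (f ^^ j) x" using assms by (auto simp: orb_def)
  have "z = (f ^^ (k + j)) x" by (simp add: z y funpow_add)
  then show "z \<in> orb f x" by (auto simp: orb_def)
qed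

lemma orb_eq:
  assumes "y \<in> orb f x" "L > 0" "(f ^^ L) x = x"
  shows "orb f y = orb f x"
proof
  show "orb f y \<subseteq> orb f x" using orb_sub assms by metis
  obtain j where y: "y = (f ^^ j) x" using assms by (auto simp: orb_def)
  have "(f ^^ ((L - 1) * j)) y = (f ^^ ((L - 1) * j + j)) x" by (simp add: y funpow_add)
  also have "(L - 1) * j + j = L * j" using assms(2) by (cases L) auto
  also have "(f ^^ (L * j)) x = x" using funpow_period_mult assms by metis
  finally have "x \<in> orb f y" by (auto simp: orb_def)
  then show "orb f x \<subseteq> orb f y" using orb_sub by metis
qed

lemma orb_self: "x \<in> orb f x"
  unfolding orb_def by (auto intro: exI[of _ 0])

lemma inj_aux:
  assumes e: "(f ^^ i) x = (f ^^ j) x" and ij: "i < j" "j < L" and LL: "(f ^^ L) x = x"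
  shows "(f ^^ (L - j + i)) x = x"
proof -
  have "(f ^^ (L - j + i)) x = (f ^^ (L - j)) ((f ^^ i) x)" by (simp only: funpow_add comp_apply)
  also have "\<dots> = (f ^^ (L - j)) ((f ^^ j) x)" by (simp only: e)
  also have "\<dots> = (f ^^ (L - j + j)) x" by (simp only: funpow_add comp_apply)
  also have "L - j + j = L" using ij by simp
  finally show ?thesis using LL by simp
qed

lemma inj_aux2:
  assumes e: "(f ^^ i) x = (f ^^ j) x" and ij: "i < j" "j < L"
    and per: "\<And>k. (f ^^ k) x = x \<longleftrightarrow> L dvd k"
  shows False
proof -
  have LL: "(f ^^ L) x = x" using per[of L] by simp
  have "(f ^^ (L - j + i)) x = x" by (rule inj_aux[OF e ij LL])
  then have d: "L dvd (L - j + i)" using per[of "L - j + i"] by simp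
  have a: "0 < L - j + i" using ij by linarith
  have b: "L - j + i < L" using ij by linarith
  show False using nat_dvd_not_less[OF a b] d by simp
qed

lemma orb_card:
  assumes "L > 0" "\<And>k. (f ^^ k) x = x \<longleftrightarrow> L dvd k"
  shows "orb f x = (\<lambda>k. (f ^^ k) x) ` {..<L}" "card (orb f x) = L"
proof -
  have LL: "(f ^^ L) x = x" using assms by simp
  have m: "(f ^^ k) x = (f ^^ (k mod L)) x" for k
  proof -
    have "(f ^^ k) x = (f ^^ (k mod L + L * (k div L))) x" by (simp only: mod_mult_div_eq)
    then have "(f ^^ k) x = (f ^^ (k mod L)) ((f ^^ (L * (k div L))) x)"
      by (simp only: funpow_add comp_apply)
    then show ?thesis using funpow_period_mult[OF LL] by simp
  qed
  show o: "orb f x = (\<lambda>k. (f ^^ k) x) ` {..<L}"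
  proof
    show "orb f x \<subseteq> (\<lambda>k. (f ^^ k) x) ` {..<L}"
    proof
      fix z assume "z \<in> orb f x"
      then obtain k where z: "z = (f ^^ k) x" by (auto simp: orb_def)
      then have "z = (f ^^ (k mod L)) x" using m[of k] by (rule trans)
      moreover have "k mod L \<in> {..<L}" using assms(1) by simp
      ultimately show "z \<in> (\<lambda>k. (f ^^ k) x) ` {..<L}" by blast
    qed
    show "(\<lambda>k. (f ^^ k) x) ` {..<L} \<subseteq> orb f x" unfolding orb_def by auto
  qed
  have "inj_on (\<lambda>k. (f ^^ k) x) {..<L}"
  proof (rule inj_onI)
    fix i j assume i: "i \<in> {..<L}" and j: "j \<in> {..<L}" and e: "(f ^^ i) x = (f ^^ j) x"
    have i': "i < L" using i by simp
    have j': "j < L" using j by simp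
    show "i = j"
    proof (rule ccontr)
      assume "i \<noteq> j"
      then consider "i < j" | "j < i" by linarith
      then show False
      proof cases
        case 1
        show False by (rule inj_aux2[OF e 1 j' assms(2)])
      next
        case 2
        show False by (rule inj_aux2[OF e[symmetric] 2 i' assms(2)])
      qed
    qed
  qed
  then show "card (orb f x) = L" using o by (simp add: card_image)
qed

lemma count_orbits:
  fixes per :: "'a \<Rightarrow> nat"
  assumes fin: "finite B" and inv: "\<And>x. x \<in> B \<Longrightarrow> f x \<in> B"
    and pos: "\<And>x. x \<in> B \<Longrightarrow> per x > 0"
    and per: "\<And>x k. x \<in> B \<Longrightarrow> (f ^^ k) x = x \<longleftrightarrow> per x dvd k"
  shows "real (num_cycles f B) = (\<Sum>x\<in>B. 1 / real (per x))"
proof -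
  have nc: "num_cycles f B = card (orb f ` B)"
    unfolding num_cycles_def orb_def by simp
  have inv': "(f ^^ k) x \<in> B" if "x \<in> B" for x k
    using that by (induction k) (auto intro: inv)
  have orbB: "orb f x \<subseteq> B" if "x \<in> B" for x
    using inv' that by (auto simp: orb_def)
  have cardo: "card (orb f x) = per x" if "x \<in> B" for x
    by (rule orb_card(2)[of "per x" f x, OF pos[OF that] per[OF that]])
  have "(\<Sum>x\<in>B. 1 / real (per x)) =
        (\<Sum>Q\<in>orb f ` B. \<Sum>x\<in>{x \<in> B. orb f x = Q}. 1 / real (per x))"
    by (rule sum.image_gen[OF fin])
  also have "\<dots> = (\<Sum>Q\<in>orb f ` B. 1)"
  proof (rule sum.cong[OF refl])
    fix Q assume "Q \<in> orb f ` B"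
    then obtain y where y: "y \<in> B" "Q = orb f y" by auto
    have yL: "(f ^^ per y) y = y" using per y(1) by simp
    have S: "{x \<in> B. orb f x = Q} = Q"
    proof
      show "{x \<in> B. orb f x = Q} \<subseteq> Q"
      proof
        fix x assume "x \<in> {x \<in> B. orb f x = Q}"
        then have "orb f x = Q" by simp
        then show "x \<in> Q" using orb_self[of x f] by simp
      qed
      show "Q \<subseteq> {x \<in> B. orb f x = Q}"
      proof
        fix x assume x: "x \<in> Q"
        then have "orb f x = Q" using y orb_eq[OF _ pos[OF y(1)] yL] by simp
        moreover have "x \<in> B" using x y orbB by blast
        ultimately show "x \<in> {x \<in> B. orb f x = Q}" by simp
      qed
    qed
    have fQ: "finite Q" using y orbB[OF y(1)] fin by (simp add: finite_subset)
    have "(\<Sum>x\<in>Q. 1 / real (per x)) = (\<Sum>x\<in>Q. 1 / real (card Q))"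
    proof (rule sum.cong[OF refl])
      fix x assume "x \<in> Q"
      then have "x \<in> B" "orb f x = Q" using S by auto
      then show "1 / real (per x) = 1 / real (card Q)" using cardo by metis
    qed
    also have "\<dots> = 1"
      using fQ orb_self[of y f] y pos cardo by (auto simp: card_gt_0_iff)
    finally show "(\<Sum>x\<in>{x \<in> B. orb f x = Q}. 1 / real (per x)) = 1" using S by simp
  qed
  also have "\<dots> = real (card (orb f ` B))" by simp
  finally show ?thesis using nc by simp
qed



definition Lq :: "nat \<Rightarrow> nat \<Rightarrow> nat \<Rightarrow> nat \<Rightarrow> nat" where
  "Lq q r t x = (if [r = 1] (mod q) then (if q dvd t then 1 else q)
     else if q dvd ((r - 1) * x + t) then 1 else ord q r)"

lemma H_id:
  fixes r t x :: nat
  assumes "r \<ge> 1"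
  shows "(r - 1) * (((\<lambda>y. r * y + t) ^^ k) x) + t = r ^ k * ((r - 1) * x + t)"
proof (induction k)
  case 0 then show ?case by simp
next
  case (Suc k)
  obtain s where s: "r = Suc s" using assms by (cases r) auto
  have "(r - 1) * (((\<lambda>y. r * y + t) ^^ Suc k) x) + t
      = r * ((r - 1) * (((\<lambda>y. r * y + t) ^^ k) x) + t)"
    by (simp add: s algebra_simps)
  also have "\<dots> = r ^ Suc k * ((r - 1) * x + t)" using Suc by simp
  finally show ?case .
qed

lemma H_one:
  fixes r t x q :: nat
  assumes "[r = 1] (mod q)"
  shows "[((\<lambda>y. r * y + t) ^^ k) x = x + k * t] (mod q)"
proof (induction k)
  case 0 then show ?case by simp
next
  case (Suc k)
  have "[r * (((\<lambda>y. r * y + t) ^^ k) x) + t = 1 * (x + k * t) + t] (mod q)"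
    by (intro cong_add cong_mult assms Suc cong_refl)
  then show ?case by (simp add: algebra_simps)
qed

lemma per_q:
  fixes r t x q :: nat
  assumes q: "prime q" and r: "r \<ge> 1" and cop: "coprime r q"
  shows "[((\<lambda>y. r * y + t) ^^ k) x = x] (mod q) \<longleftrightarrow> Lq q r t x dvd k"
proof (cases "[r = 1] (mod q)")
  case True
  have "[((\<lambda>y. r * y + t) ^^ k) x = x] (mod q) \<longleftrightarrow> [x + k * t = x] (mod q)"
  proof
    have h1: "[((\<lambda>y. r * y + t) ^^ k) x = x + k * t] (mod q)" by (rule H_one[OF True])
    show "[x + k * t = x] (mod q)" if "[((\<lambda>y. r * y + t) ^^ k) x = x] (mod q)"
      by (rule cong_trans[OF cong_sym[OF h1] that])
    show "[((\<lambda>y. r * y + t) ^^ k) x = x] (mod q)" if "[x + k * t = x] (mod q)"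
      by (rule cong_trans[OF h1 that])
  qed
  also have "\<dots> \<longleftrightarrow> q dvd k * t" by (simp add: cong_add_lcancel_0_nat cong_0_iff)
  also have "\<dots> \<longleftrightarrow> q dvd k \<or> q dvd t" using q by (simp add: prime_dvd_mult_iff)
  finally show ?thesis using True by (auto simp: Lq_def)
next
  case False
  define c where "c = r - 1"
  define z where "z = c * x + t"
  have rc: "r = c + 1" using r c_def by simp
  have ncq: "\<not> q dvd c"
  proof
    assume "q dvd c"
    then have "[c + 1 = 0 + 1] (mod q)" by (intro cong_add cong_refl) (simp add: cong_0_iff)
    then show False using False rc by simp
  qed
  have cc: "coprime c q" using prime_imp_coprime[OF q ncq] by (simp add: coprime_commute)
  have "[((\<lambda>y. r * y + t) ^^ k) x = x] (mod q)
     \<longleftrightarrow> [c * ((\<lambda>y. r * y + t) ^^ k) x + t = c * x + t] (mod q)"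
    using cc by (simp add: cong_add_rcancel_nat cong_mult_lcancel_nat)
  also have "\<dots> \<longleftrightarrow> [r ^ k * z = 1 * z] (mod q)"
    using H_id[OF r, where t=t and k=k and x=x] by (simp add: c_def z_def)
  also have "\<dots> \<longleftrightarrow> q dvd z \<or> [r ^ k = 1] (mod q)"
  proof (cases "q dvd z")
    case True
    then have "[r ^ k * z = 0] (mod q)" "[1 * z = 0] (mod q)" by (auto simp: cong_0_iff)
    then have "[r ^ k * z = 1 * z] (mod q)" by (rule cong_trans[OF _ cong_sym])
    then show ?thesis using True by simp
  next
    case F: False
    have "coprime z q" using prime_imp_coprime[OF q F] by (simp add: coprime_commute)
    then show ?thesis using F cong_mult_rcancel_nat[of z q "r ^ k" 1] by simp
  qed
  also have "\<dots> \<longleftrightarrow> q dvd z \<or> ord q r dvd k" using ord_divides'[of r k q] by simp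
  finally show ?thesis using False by (auto simp: Lq_def c_def z_def)
qed

lemma Lq_mod: fixes x q :: nat shows "Lq q r t (x mod q) = Lq q r t x"
proof -
  have "((r - 1) * (x mod q) + t) mod q = ((r - 1) * x + t) mod q"
  proof -
    have "((r - 1) * (x mod q) + t) mod q = ((r - 1) * (x mod q) mod q + t) mod q"
      by (rule mod_add_left_eq[symmetric])
    also have "\<dots> = ((r - 1) * x mod q + t) mod q" by (simp only: mod_mult_right_eq)
    also have "\<dots> = ((r - 1) * x + t) mod q" by (rule mod_add_left_eq)
    finally show ?thesis .
  qed
  then show ?thesis unfolding Lq_def by (simp add: dvd_eq_mod_eq_0)
qed

lemma Lq_pos: "prime q \<Longrightarrow> coprime r q \<Longrightarrow> Lq q r t x > 0"
  unfolding Lq_def by (auto simp: prime_gt_0_nat coprime_commute)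

lemma g_pow:
  fixes r t x n :: nat
  assumes "x < n"
  shows "((\<lambda>y. (r * y + t) mod n) ^^ k) x = ((\<lambda>y. r * y + t) ^^ k) x mod n"
proof (induction k)
  case 0 then show ?case using assms by simp
next
  case (Suc k)
  have "(r * (((\<lambda>y. r * y + t) ^^ k) x mod n) + t) mod n
      = ((r * (((\<lambda>y. r * y + t) ^^ k) x mod n)) mod n + t) mod n" by (rule mod_add_left_eq[symmetric])
  also have "\<dots> = ((r * (((\<lambda>y. r * y + t) ^^ k) x)) mod n + t) mod n" by (simp only: mod_mult_right_eq)
  also have "\<dots> = (r * (((\<lambda>y. r * y + t) ^^ k) x) + t) mod n" by (rule mod_add_left_eq)
  finally show ?case using Suc by simp
qed

lemma g_per:
  fixes p r t x :: nat
  assumes p: "prime p" "p > 3" and r: "r \<ge> 1" "coprime r (3 * p)" and x: "x < 3 * p"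
  shows "((\<lambda>y. (r * y + t) mod (3 * p)) ^^ k) x = x \<longleftrightarrow>
         lcm (Lq 3 r t x) (Lq p r t x) dvd k"
proof -
  let ?H = "((\<lambda>y. r * y + t) ^^ k) x"
  have c3p: "coprime 3 p" using p by (simp add: primes_coprime)
  have pr3: "prime (3::nat)" by simp
  have cr3: "coprime r 3" "coprime r p" using r(2) by auto
  have h3: "[?H = x] (mod 3) \<longleftrightarrow> Lq 3 r t x dvd k" using per_q[OF pr3 r(1) cr3(1)] .
  have hp: "[?H = x] (mod p) \<longleftrightarrow> Lq p r t x dvd k" using per_q[OF p(1) r(1) cr3(2)] .
  have "((\<lambda>y. (r * y + t) mod (3 * p)) ^^ k) x = x \<longleftrightarrow> [?H = x] (mod 3 * p)"
    using g_pow[OF x] x by (simp add: cong_def)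
  also have "\<dots> \<longleftrightarrow> [?H = x] (mod 3) \<and> [?H = x] (mod p)"
  proof
    assume a: "[?H = x] (mod 3 * p)"
    have a': "[?H = x] (mod p * 3)" using a by (simp add: mult.commute)
    show "[?H = x] (mod 3) \<and> [?H = x] (mod p)"
      using cong_modulus_mult_nat[OF a] cong_modulus_mult_nat[OF a'] by simp
  next
    assume "[?H = x] (mod 3) \<and> [?H = x] (mod p)"
    then show "[?H = x] (mod 3 * p)" using coprime_cong_mult_nat[OF _ _ c3p] by simp
  qed
  also have "\<dots> \<longleftrightarrow> Lq 3 r t x dvd k \<and> Lq p r t x dvd k"
    using h3 hp by simp
  finally show ?thesis by simp
qed



lemma bij_of_inj_card:
  assumes "inj_on h A" "h ` A \<subseteq> B" "finite B" "card A = card B"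
  shows "bij_betw h A B"
proof -
  have "card (h ` A) = card B" using assms by (simp add: card_image)
  then have "h ` A = B" using card_subset_eq[OF assms(3) assms(2)] by simp
  then show ?thesis using assms(1) by (simp add: bij_betw_def)
qed

lemma crt_bij:
  fixes m n :: nat
  assumes "coprime m n" "m > 0" "n > 0"
  shows "bij_betw (\<lambda>x. (x mod m, x mod n)) {..<m * n} ({..<m} \<times> {..<n})"
proof (rule bij_of_inj_card)
  show "inj_on (\<lambda>x. (x mod m, x mod n)) {..<m * n}"
  proof (rule inj_onI)
    fix x y assume x: "x \<in> {..<m * n}" and y: "y \<in> {..<m * n}"
      and e: "(x mod m, x mod n) = (y mod m, y mod n)"
    then have "[x = y] (mod m)" "[x = y] (mod n)" by (auto simp: cong_def)
    then have "[x = y] (mod m * n)" using coprime_cong_mult_nat assms(1) by blast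
    then show "x = y" using x y by (simp add: cong_def)
  qed
  show "(\<lambda>x. (x mod m, x mod n)) ` {..<m * n} \<subseteq> {..<m} \<times> {..<n}"
    using assms by auto
  show "finite ({..<m} \<times> {..<n})" by simp
  show "card {..<m * n} = card ({..<m} \<times> {..<n})" by (simp add: card_cartesian_product)
qed

lemma sum_dvd_bool:
  fixes q c t :: nat and F :: "bool \<Rightarrow> real"
  assumes q: "prime q" and c: "coprime c q"
  shows "(\<Sum>b<q. F (q dvd c * b + t)) = F True + real (q - 1) * F False"
proof -
  let ?h = "\<lambda>b. (c * b + t) mod q"
  have q0: "q > 0" using q by (simp add: prime_gt_0_nat)
  have bij: "bij_betw ?h {..<q} {..<q}"
  proof (rule bij_of_inj_card)
    show "inj_on ?h {..<q}"
    proof (rule inj_onI)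
      fix x y assume x: "x \<in> {..<q}" and y: "y \<in> {..<q}" and e: "?h x = ?h y"
      then have "[c * x + t = c * y + t] (mod q)" by (simp add: cong_def)
      then have "[c * x = c * y] (mod q)" by (simp add: cong_add_rcancel_nat)
      then have "[x = y] (mod q)" using c by (simp add: cong_mult_lcancel_nat)
      then show "x = y" using x y by (simp add: cong_def)
    qed
    show "?h ` {..<q} \<subseteq> {..<q}" using q0 by auto
  qed auto
  have "(\<Sum>b<q. F (q dvd c * b + t)) = (\<Sum>b<q. (\<lambda>y. F (y = 0)) (?h b))"
    by (simp add: dvd_eq_mod_eq_0)
  also have "\<dots> = (\<Sum>y<q. F (y = 0))" by (rule sum.reindex_bij_betw[OF bij])
  also have "\<dots> = F (0 = 0) + (\<Sum>y\<in>{..<q} - {0}. F (y = 0))"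
    using q0 by (subst sum.remove[of _ 0]) auto
  also have "(\<Sum>y\<in>{..<q} - {0}. F (y = 0)) = (\<Sum>y\<in>{..<q} - {0}. F False)"
    by (rule sum.cong) auto
  also have "\<dots> = real (q - 1) * F False" using q0 by simp
  finally show ?thesis by simp
qed

lemma aut_pow:
  "(aut n r t ^^ k) (x, True) = (((\<lambda>y. (r * y + t) mod n) ^^ k) x, True)"
  by (induction k) (auto simp: aut_def)

lemma cop_r1:
  fixes q r :: nat
  assumes q: "prime q" and r: "r \<ge> 1" and n: "\<not> [r = 1] (mod q)"
  shows "coprime (r - 1) q"
proof -
  have nd: "\<not> q dvd (r - 1)"
  proof
    assume "q dvd (r - 1)"
    then have "[r - 1 + 1 = 0 + 1] (mod q)" by (intro cong_add cong_refl) (simp add: cong_0_iff)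
    then show False using n r by simp
  qed
  then show ?thesis using prime_imp_coprime[OF q nd] by (simp add: coprime_commute)
qed

lemma main_sum:
  fixes p r t :: nat
  assumes p: "prime p" "p > 3" and r: "r \<ge> 1" "coprime r (3 * p)"
  shows "real (num_cycles (aut (3 * p) r t) (Vset (3 * p))) =
    (\<Sum>a<3. \<Sum>b<p. 1 / real (lcm (Lq 3 r t a) (Lq p r t b)))"
proof -
  let ?n = "3 * p"
  let ?F = "\<lambda>x. 1 / real (lcm (Lq 3 r t x) (Lq p r t x))"
  have n0: "?n > 0" using p by simp
  have cr: "coprime r 3" "coprime r p" using r(2) by auto
  have "real (num_cycles (aut ?n r t) (Vset ?n)) = (\<Sum>z\<in>Vset ?n. ?F (fst z))"
  proof (rule count_orbits)
    show "finite (Vset ?n)" by (simp add: Vset_def)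
    fix z assume z: "z \<in> Vset ?n"
    then obtain x where zx: "z = (x, True)" "x < ?n" by (auto simp: Vset_def)
    show "aut ?n r t z \<in> Vset ?n" using zx n0 by (simp add: aut_def Vset_def)
    show "0 < lcm (Lq 3 r t (fst z)) (Lq p r t (fst z))"
      using Lq_pos[of 3 r] Lq_pos[OF p(1) cr(2)] cr by (simp add: lcm_pos_nat)
    fix k
    show "(aut ?n r t ^^ k) z = z \<longleftrightarrow> lcm (Lq 3 r t (fst z)) (Lq p r t (fst z)) dvd k"
      using g_per[OF p r zx(2), of k] zx by (simp add: aut_pow)
  qed
  also have "(\<Sum>z\<in>Vset ?n. ?F (fst z)) = (\<Sum>x<?n. ?F x)"
  proof -
    have "Vset ?n = (\<lambda>x. (x, True)) ` {..<?n}" by (auto simp: Vset_def)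
    moreover have "(\<Sum>z\<in>(\<lambda>x. (x, True)) ` {..<?n}. ?F (fst z)) = (\<Sum>x<?n. ?F x)"
      by (subst sum.reindex) (auto simp: inj_on_def)
    ultimately show ?thesis by simp
  qed
  also have "\<dots> = (\<Sum>x<?n. (\<lambda>(a, b). 1 / real (lcm (Lq 3 r t a) (Lq p r t b))) (x mod 3, x mod p))"
    by (simp add: Lq_mod)
  also have "\<dots> = (\<Sum>z\<in>{..<3} \<times> {..<p}. (\<lambda>(a, b). 1 / real (lcm (Lq 3 r t a) (Lq p r t b))) z)"
    by (rule sum.reindex_bij_betw[OF crt_bij]) (use p in \<open>auto simp: primes_coprime prime_gt_0_nat\<close>)
  also have "\<dots> = (\<Sum>a<3. \<Sum>b<p. 1 / real (lcm (Lq 3 r t a) (Lq p r t b)))"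
    by (simp add: sum.cartesian_product)
  finally show ?thesis .
qed



lemma sum_Lq_ne:
  fixes q r t :: nat and G :: "nat \<Rightarrow> real"
  assumes q: "prime q" and r: "r \<ge> 1" and n: "\<not> [r = 1] (mod q)"
  shows "(\<Sum>a<q. G (Lq q r t a)) = G 1 + real (q - 1) * G (ord q r)"
proof -
  have "(\<Sum>a<q. G (Lq q r t a)) = (\<Sum>a<q. (\<lambda>B. G (if B then 1 else ord q r)) (q dvd (r - 1) * a + t))"
    using n by (simp add: Lq_def)
  also have "\<dots> = G 1 + real (q - 1) * G (ord q r)"
    using sum_dvd_bool[OF q cop_r1[OF q r n], where F="\<lambda>B. G (if B then 1 else ord q r)" and t=t]
    by simp
  finally show ?thesis .
qed

lemma sum_Lq_eq:
  fixes q r t :: nat and G :: "nat \<Rightarrow> real"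
  assumes e: "[r = 1] (mod q)"
  shows "(\<Sum>a<q. G (Lq q r t a)) = real q * G (if q dvd t then 1 else q)"
  using e by (simp add: Lq_def)

theorem lemma5p10:
  fixes p r t :: nat
  assumes "prime p" and "p > 3"
    and "t \<in> {1, 3, p, 3 * p}"
    and "1 \<le> r" and "r \<le> 3 * p - 1" and "coprime r (3 * p)"
  shows "real (num_cycles (aut (3 * p) r t) (Vset (3 * p))) =
    (if r = 1 then real (gcd (3 * p) t)
     else if [r = 1] (mod 3) then
       (if t \<in> {3, 3 * p} then 3 + 3 * (real p - 1) / real (ord p r)
        else if \<not> 3 dvd ord p r then 1 + (real p - 1) / real (ord p r)
        else 1 + 3 * (real p - 1) / real (ord p r))
     else
       (if [r = 1] (mod p) then 2 * real (gcd p t)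
        else if odd (ord p r) then 2 + 2 * (real p - 1) / real (ord p r)
        else 2 + 3 * (real p - 1) / real (ord p r)))"
proof -
  note p = assms(1,2) and tt = assms(3) and r1 = assms(4) and rle = assms(5) and cop = assms(6)
  have cr3: "coprime r 3" and crp: "coprime r p" using cop by auto
  have p0: "p > 0" using p by simp
  have pr3: "prime (3::nat)" by simp
  have n3p: "\<not> 3 dvd p"
  proof
    assume "3 dvd p"
    then have "3 = p" using primes_dvd_imp_eq[OF pr3 p(1)] by simp
    then show False using p by simp
  qed
  have n2p: "\<not> 2 dvd p"
  proof
    assume "2 dvd p"
    then have "2 = p" using primes_dvd_imp_eq[OF two_is_prime_nat p(1)] by simp
    then show False using p by simp
  qed
  have np3: "\<not> p dvd 3"
  proof
    assume "p dvd 3"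
    then have "p \<le> 3" by (rule dvd_imp_le) simp
    then show False using p by simp
  qed
  have np1: "\<not> p dvd 1" using p by simp
  have tcases: "t = 1 \<or> t = 3 \<or> t = p \<or> t = 3 * p" using tt by simp
  have t3: "3 dvd t \<longleftrightarrow> t \<in> {3, 3 * p}"
    using tcases
  proof (elim disjE)
    assume "t = 1" then show ?thesis using p by simp
  next
    assume "t = 3" then show ?thesis by simp
  next
    assume "t = p" then show ?thesis using p n3p by simp
  next
    assume "t = 3 * p" then show ?thesis by simp
  qed
  have tp: "p dvd t \<longleftrightarrow> t \<in> {p, 3 * p}"
    using tcases
  proof (elim disjE)
    assume "t = 1" then show ?thesis using p np1 by simp
  next
    assume "t = 3" then show ?thesis using p np3 by simp
  next
    assume "t = p" then show ?thesis by simp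
  next
    assume "t = 3 * p" then show ?thesis by simp
  qed
  define d where "d = ord p r"
  have d0: "d > 0" using crp by (simp add: d_def coprime_commute)
  have lcm3p: "lcm 3 p = 3 * p" using n3p prime_imp_coprime[OF pr3 n3p] by (simp add: lcm_coprime)
  have lcm2p: "lcm 2 p = 2 * p" using prime_imp_coprime[OF two_is_prime_nat n2p] by (simp add: lcm_coprime)
  have S: "real (num_cycles (aut (3 * p) r t) (Vset (3 * p))) =
    (\<Sum>a<3. \<Sum>b<p. 1 / real (lcm (Lq 3 r t a) (Lq p r t b)))"
    by (rule main_sum[OF p r1 cop])
  let ?RHS = "(if r = 1 then real (gcd (3 * p) t)
     else if [r = 1] (mod 3) then
       (if t \<in> {3, 3 * p} then 3 + 3 * (real p - 1) / real (ord p r)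
        else if \<not> 3 dvd ord p r then 1 + (real p - 1) / real (ord p r)
        else 1 + 3 * (real p - 1) / real (ord p r))
     else
       (if [r = 1] (mod p) then 2 * real (gcd p t)
        else if odd (ord p r) then 2 + 2 * (real p - 1) / real (ord p r)
        else 2 + 3 * (real p - 1) / real (ord p r)))"
  have pm1: "real (p - 1) = real p - 1" using p0 by (simp add: of_nat_diff)
  have dr: "real d > 0" using d0 by simp
  show ?thesis
  proof (cases "r = 1")
    case True
    have e3: "[r = 1] (mod 3)" and ep: "[r = 1] (mod p)" using True by auto
    have innerE: "(\<Sum>b<p. 1 / real (lcm L (Lq p r t b))) =
        real p * (1 / real (lcm L (if p dvd t then 1 else p)))" for L
      using sum_Lq_eq[OF ep, where G="\<lambda>M. 1 / real (lcm L M)" and t=t] by simp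
    have V: "real (num_cycles (aut (3 * p) r t) (Vset (3 * p))) =
       3 * (real p * (1 / real (lcm (if 3 dvd t then 1 else 3) (if p dvd t then 1 else p))))"
      using sum_Lq_eq[OF e3, where G="\<lambda>L. \<Sum>b<p. 1 / real (lcm L (Lq p r t b))" and t=t]
      unfolding S innerE by simp
    have R: "?RHS = real (gcd (3 * p) t)" using True by simp
    from tt consider "t = 1" | "t = 3" | "t = p" | "t = 3 * p" by blast
    then show ?thesis
    proof cases
      case 1
      then have "\<not> 3 dvd t" "\<not> p dvd t" using t3 tp p by auto
      then show ?thesis unfolding R V using 1 lcm3p p0 by simp
    next
      case 2
      then have "3 dvd t" "\<not> p dvd t" using t3 tp p by auto
      then show ?thesis unfolding R V using 2 p0 by simp
    next
      case 3
      then have "\<not> 3 dvd t" "p dvd t" using t3 tp p by auto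
      then show ?thesis unfolding R V using 3 p0 by simp
    next
      case 4
      then have "3 dvd t" "p dvd t" using t3 tp p by auto
      then show ?thesis unfolding R V using 4 p0 by simp
    qed
  next
    case r1n: False
    show ?thesis
    proof (cases "[r = 1] (mod 3)")
      case e3: True
      have np: "\<not> [r = 1] (mod p)"
      proof
        assume "[r = 1] (mod p)"
        then have "[r = 1] (mod 3 * p)"
          using coprime_cong_mult_nat[OF e3 _ prime_imp_coprime[OF pr3 n3p]] by simp
        then have "r mod (3 * p) = 1" using p by (simp add: cong_def)
        then show False using r1n rle p by simp
      qed
      have innerE: "(\<Sum>b<p. 1 / real (lcm L (Lq p r t b))) =
          1 / real (lcm L 1) + real (p - 1) * (1 / real (lcm L d))" for L
        using sum_Lq_ne[OF p(1) r1 np, where G="\<lambda>M. 1 / real (lcm L M)" and t=t]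
        by (simp add: d_def)
      have V: "real (num_cycles (aut (3 * p) r t) (Vset (3 * p))) =
         3 * (1 / real (lcm (if 3 dvd t then 1 else 3) 1) + real (p - 1) *
               (1 / real (lcm (if 3 dvd t then 1 else 3) d)))"
        using sum_Lq_eq[OF e3, where G="\<lambda>L. \<Sum>b<p. 1 / real (lcm L (Lq p r t b))" and t=t]
        unfolding S innerE by simp
      have R: "?RHS = (if t \<in> {3, 3 * p} then 3 + 3 * (real p - 1) / real d
        else if \<not> 3 dvd d then 1 + (real p - 1) / real d
        else 1 + 3 * (real p - 1) / real d)" using r1n e3 by (simp add: d_def)
      show ?thesis
      proof (cases "3 dvd t")
        case True
        then have "t \<in> {3, 3 * p}" using t3 by simp
        then show ?thesis unfolding R V using True pm1 dr by (simp add: field_simps)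
      next
        case False
        then have tn: "t \<notin> {3, 3 * p}" using t3 by simp
        show ?thesis
        proof (cases "3 dvd d")
          case True
          then have "lcm 3 d = d" by simp
          then show ?thesis unfolding R V using True False tn pm1 dr by (simp add: field_simps)
        next
          case F2: False
          then have "lcm 3 d = 3 * d" using prime_imp_coprime[OF pr3 F2] by (simp add: lcm_coprime)
          then show ?thesis unfolding R V using F2 False tn pm1 dr by (simp add: field_simps)
        qed
      qed
    next
      case n3: False
      have o3: "ord 3 r = 2"
      proof -
        have "r mod 3 \<noteq> 0" using cr3 by (auto simp: dvd_eq_mod_eq_0[symmetric] coprime_commute)
        moreover have "r mod 3 \<noteq> 1" using n3 by (simp add: cong_def)
        ultimately have "r mod 3 = 2" by linarith
        then have "r ^ 2 mod 3 = 1" by (simp add: power_mod[symmetric])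
        then show ?thesis using n3 by (simp add: ord_eq_2_iff cong_def)
      qed
      show ?thesis
      proof (cases "[r = 1] (mod p)")
        case ep: True
        have innerE: "(\<Sum>b<p. 1 / real (lcm L (Lq p r t b))) =
            real p * (1 / real (lcm L (if p dvd t then 1 else p)))" for L
          using sum_Lq_eq[OF ep, where G="\<lambda>M. 1 / real (lcm L M)" and t=t] by simp
        have V: "real (num_cycles (aut (3 * p) r t) (Vset (3 * p))) =
           real p * (1 / real (lcm 1 (if p dvd t then 1 else p))) + 2 *
           (real p * (1 / real (lcm 2 (if p dvd t then 1 else p))))"
          using sum_Lq_ne[OF pr3 r1 n3, where G="\<lambda>L. \<Sum>b<p. 1 / real (lcm L (Lq p r t b))" and t=t]
          unfolding S innerE o3 by simp
        have R: "?RHS = 2 * real (gcd p t)" using r1n n3 ep by simp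
        show ?thesis
        proof (cases "p dvd t")
          case True
          then have "t = p \<or> t = 3 * p" using tp by simp
          then have "gcd p t = p" by auto
          then show ?thesis unfolding R V using True p0 by simp
        next
          case False
          then have "t = 1 \<or> t = 3" using tp tt by auto
          moreover have "gcd p 3 = 1" using prime_imp_coprime[OF p(1) np3] by simp
          ultimately have "gcd p t = 1" by auto
          then show ?thesis unfolding R V using False p0 lcm2p by simp
        qed
      next
        case np: False
        have innerE: "(\<Sum>b<p. 1 / real (lcm L (Lq p r t b))) =
            1 / real (lcm L 1) + real (p - 1) * (1 / real (lcm L d))" for L
          using sum_Lq_ne[OF p(1) r1 np, where G="\<lambda>M. 1 / real (lcm L M)" and t=t]
          by (simp add: d_def)
        have V: "real (num_cycles (aut (3 * p) r t) (Vset (3 * p))) =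
           (1 / real (lcm 1 1) + real (p - 1) * (1 / real (lcm 1 d))) + 2 *
           (1 / real (lcm 2 1) + real (p - 1) * (1 / real (lcm 2 d)))"
          using sum_Lq_ne[OF pr3 r1 n3, where G="\<lambda>L. \<Sum>b<p. 1 / real (lcm L (Lq p r t b))" and t=t]
          unfolding S innerE o3 by simp
        have R: "?RHS = (if odd d then 2 + 2 * (real p - 1) / real d
          else 2 + 3 * (real p - 1) / real d)" using r1n n3 np by (simp add: d_def)
        show ?thesis
        proof (cases "even d")
          case True
          then have "lcm 2 d = d" by simp
          then show ?thesis unfolding R V using True pm1 dr by (simp add: field_simps)
        next
          case False
          then have "lcm 2 d = 2 * d"
            using prime_imp_coprime[OF two_is_prime_nat False] by (simp add: lcm_coprime)
          then show ?thesis unfolding R V using False pm1 dr by (simp add: field_simps)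
        qed
      qed
    qed
  qed
qed


end
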